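(* Let $F,G_1,\dots,G_n$ be pairwise disjoint always solvable graphs, let $u\in V(F)$ and $v_i\in V(G_i)$ for $1\le i\le n$, and let $H$ be the graph obtained from the disjoint union $F\cup G_1\cup\cdots\cup G_n$ by adding the edges $v_iu$ for $1\le i\le n$. If $\mathcal{A}_F(u)=0$, then $H$ is always solvable. If $\mathcal{A}_F(u)=1$, then $H$ is always solvable if and only if the number of indices $i$ with $\mathcal{A}_{G_i}(v_i)=1$ is even.
   Context: For a finite simple graph $G$ with vertex set $\{v_1,\dots,v_n\}$, the closed adjacency matrix $N(G)$ is the $n\times n$ matrix over $\mathbb{Z}_2$ whose $(i,j)$ entry is $1$ iff $i=j$ or $v_i$ is adjacent to $v_j$. $G$ is always solvable if $\operatorname{Ker}(N(G))=0$. Elements of $\operatorname{Ker}(N(G))$ are null patterns. A vertex $v$ is half-activated if $\boldsymbol{\ell}(v)=1$ for some null pattern $\boldsymbol{\ell}$; otherwise it is always-activated if $\mathbf{p}(v)=1$ for every $\mathbf{p}$ with $N(G)\mathbf{p}=\mathbf{1}$ (the all-ones vector), and never-activated if $\mathbf{p}(v)=0$ for every such $\mathbf{p}$. The activation number $\mathcal{A}_G(v)$ is $1$, $0$, $-1$ for always-, never-, half-activated respectively. *)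

theory Defs
  imports Main "HOL-Library.Z2"
begin

type_synonym 'a graph = "'a set \<times> ('a \<Rightarrow> 'a \<Rightarrow> bool)"

definition verts :: "'a graph \<Rightarrow> 'a set" where "verts G = fst G"
definition adj :: "'a graph \<Rightarrow> 'a \<Rightarrow> 'a \<Rightarrow> bool" where "adj G = snd G"

definition simple_graph :: "'a graph \<Rightarrow> bool" where
  "simple_graph G \<longleftrightarrow> finite (verts G)
     \<and> (\<forall>x y. adj G x y \<longrightarrow> x \<in> verts G \<and> y \<in> verts G)
     \<and> (\<forall>x y. adj G x y \<longrightarrow> adj G y x)
     \<and> (\<forall>x. \<not> adj G x x)"

definition vec_on :: "'a graph \<Rightarrow> ('a \<Rightarrow> bit) \<Rightarrow> bool" where
  "vec_on G p \<longleftrightarrow> (\<forall>x. x \<notin> verts G \<longrightarrow> p x = 0)"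

text \<open>The product N(G) p of the closed adjacency matrix with a vector p, over Z2.\<close>
definition closed_adj_mult :: "'a graph \<Rightarrow> ('a \<Rightarrow> bit) \<Rightarrow> 'a \<Rightarrow> bit" where
  "closed_adj_mult G p v = (\<Sum>w\<in>{w\<in>verts G. w = v \<or> adj G v w}. p w)"

definition null_pattern :: "'a graph \<Rightarrow> ('a \<Rightarrow> bit) \<Rightarrow> bool" where
  "null_pattern G l \<longleftrightarrow> vec_on G l \<and> (\<forall>v\<in>verts G. closed_adj_mult G l v = 0)"

definition always_solvable :: "'a graph \<Rightarrow> bool" where
  "always_solvable G \<longleftrightarrow> (\<forall>l. null_pattern G l \<longrightarrow> l = (\<lambda>_. 0))"

definition solution :: "'a graph \<Rightarrow> ('a \<Rightarrow> bit) \<Rightarrow> bool" where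
  "solution G p \<longleftrightarrow> vec_on G p \<and> (\<forall>v\<in>verts G. closed_adj_mult G p v = 1)"

definition half_activated :: "'a graph \<Rightarrow> 'a \<Rightarrow> bool" where
  "half_activated G v \<longleftrightarrow> (\<exists>l. null_pattern G l \<and> l v = 1)"

definition always_activated :: "'a graph \<Rightarrow> 'a \<Rightarrow> bool" where
  "always_activated G v \<longleftrightarrow> \<not> half_activated G v \<and> (\<forall>p. solution G p \<longrightarrow> p v = 1)"

definition never_activated :: "'a graph \<Rightarrow> 'a \<Rightarrow> bool" where
  "never_activated G v \<longleftrightarrow> \<not> half_activated G v \<and> (\<forall>p. solution G p \<longrightarrow> p v = 0)"

definition activation :: "'a graph \<Rightarrow> 'a \<Rightarrow> int" where
  "activation G v = (if half_activated G v then -1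
                     else if always_activated G v then 1
                     else if never_activated G v then 0 else undefined)"

text \<open>The graph H: disjoint union of F and G_0..G_(n-1) plus the edges v_i u.\<close>
definition attach_graph :: "'a graph \<Rightarrow> 'a \<Rightarrow> nat \<Rightarrow> (nat \<Rightarrow> 'a graph) \<Rightarrow> (nat \<Rightarrow> 'a) \<Rightarrow> 'a graph" where
  "attach_graph F u n G v =
     (verts F \<union> (\<Union>i<n. verts (G i)),
      \<lambda>x y. adj F x y \<or> (\<exists>i<n. adj (G i) x y)
            \<or> (\<exists>i<n. (x = v i \<and> y = u) \<or> (x = u \<and> y = v i)))"

end

theory Submission
  imports Defs
begin

lemma bit_add_self [simp]: "(a::bit) + a = 0"
  by (cases a) auto

lemma bit_add_eq0: "(a::bit) + b = 0 \<Longrightarrow> a = b"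
  by (cases a; cases b) auto

lemma bit_mult_self [simp]: "(a::bit) * a = a"
  by (cases a) auto

lemma bit_sum_card: "finite A \<Longrightarrow> (\<Sum>i\<in>A. (f i :: bit)) = of_nat (card {i\<in>A. f i = 1})"
proof (induction A rule: finite_induct)
  case empty then show ?case by simp
next
  case (insert z A)
  have "{i\<in>insert z A. f i = 1} = (if f z = 1 then insert z {i\<in>A. f i = 1} else {i\<in>A. f i = 1})"
    by auto
  then show ?case using insert by (cases "f z") (auto simp del: add_bit_eq_xor)
qed

lemma bit_of_nat_one: "(of_nat k :: bit) = 1 \<longleftrightarrow> odd k"
  by (induction k) (auto simp del: add_bit_eq_xor)

lemma cam_alt: "simple_graph G \<Longrightarrow>
  closed_adj_mult G p w = (\<Sum>y\<in>verts G. if y = w \<or> adj G w y then p y else 0)"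
  unfolding closed_adj_mult_def simple_graph_def by (simp add: sum.inter_filter)

lemma cam_vec: "simple_graph G \<Longrightarrow> vec_on G (closed_adj_mult G p)"
  unfolding vec_on_def closed_adj_mult_def simple_graph_def
proof (intro allI impI)
  fix x assume a: "finite (verts G) \<and> (\<forall>x y. adj G x y \<longrightarrow> x \<in> verts G \<and> y \<in> verts G) \<and>
        (\<forall>x y. adj G x y \<longrightarrow> adj G y x) \<and> (\<forall>x. \<not> adj G x x)" and "x \<notin> verts G"
  then have "{w \<in> verts G. w = x \<or> adj G x w} = {}" by auto
  then show "sum p {w \<in> verts G. w = x \<or> adj G x w} = 0" by (simp only: sum.empty)
qed

lemma cam_add: "closed_adj_mult G (\<lambda>x. p x + q x) w = closed_adj_mult G p w + closed_adj_mult G q w"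
  unfolding closed_adj_mult_def by (simp only: sum.distrib)

lemma cam_cong: "(\<And>x. x \<in> verts G \<Longrightarrow> p x = q x) \<Longrightarrow> closed_adj_mult G p w = closed_adj_mult G q w"
  unfolding closed_adj_mult_def by (rule sum.cong) auto

lemma uniq:
  assumes "always_solvable G" "vec_on G p" "vec_on G q"
    "\<And>w. w \<in> verts G \<Longrightarrow> closed_adj_mult G p w = closed_adj_mult G q w"
  shows "p = q"
proof -
  have "null_pattern G (\<lambda>x. p x + q x)"
    using assms(2,3,4) unfolding null_pattern_def vec_on_def
    by (auto simp: cam_add simp del: add_bit_eq_xor)
  then have "(\<lambda>x. p x + q x) = (\<lambda>_. 0)" using assms(1) unfolding always_solvable_def by blast
  then show ?thesis by (metis bit_add_eq0 ext)
qed

lemma finite_vecs: assumes "finite (verts G)" shows "finite (Collect (vec_on G))"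
proof -
  have "Collect (vec_on G) \<subseteq> (\<lambda>A x. if x \<in> A then 1 else 0) ` Pow (verts G)"
  proof
    fix p assume "p \<in> Collect (vec_on G)"
    then have "p = (\<lambda>x. if x \<in> {x\<in>verts G. p x = 1} then 1 else 0)"
      unfolding vec_on_def by (auto intro!: ext)
    then show "p \<in> (\<lambda>A x. if x \<in> A then 1 else 0) ` Pow (verts G)" by blast
  qed
  then show ?thesis using assms finite_subset by blast
qed

lemma exist:
  assumes "simple_graph G" "always_solvable G" "vec_on G b"
  shows "\<exists>x. vec_on G x \<and> (\<forall>w\<in>verts G. closed_adj_mult G x w = b w)"
proof -
  let ?S = "Collect (vec_on G)"
  let ?f = "closed_adj_mult G"
  have fin: "finite ?S" using assms(1) finite_vecs simple_graph_def by blast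
  have sub: "?f ` ?S \<subseteq> ?S" using cam_vec[OF assms(1)] by auto
  have inj: "inj_on ?f ?S"
    by (rule inj_onI) (use uniq[OF assms(2)] in auto)
  have "?f ` ?S = ?S" by (rule endo_inj_surj[OF fin sub inj])
  then have "b \<in> ?f ` ?S" using assms(3) by auto
  then show ?thesis by auto
qed

lemma zero_sym:
  assumes "finite A" "\<And>w y. a w y = a y w" "\<And>w. a w w = 0"
  shows "(\<Sum>w\<in>A. \<Sum>y\<in>A. a w y) = (0::bit)"
  using assms(1)
proof (induction A rule: finite_induct)
  case empty then show ?case by simp
next
  case (insert z A)
  have "(\<Sum>w\<in>insert z A. \<Sum>y\<in>insert z A. a w y)
     = (a z z + (\<Sum>y\<in>A. a z y)) + ((\<Sum>w\<in>A. a w z) + (\<Sum>w\<in>A. \<Sum>y\<in>A. a w y))"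
    using insert by (simp add: sum.distrib del: add_bit_eq_xor)
  also have "\<dots> = (\<Sum>y\<in>A. a z y) + (\<Sum>y\<in>A. a z y)"
    using insert assms(2,3) by (simp del: add_bit_eq_xor)
  also have "\<dots> = 0" by simp
  finally show ?case .
qed

lemma quad:
  assumes "simple_graph G"
  shows "(\<Sum>w\<in>verts G. x w * closed_adj_mult G x w) = (\<Sum>w\<in>verts G. x w)"
proof -
  have fin: "finite (verts G)" and irr: "\<And>w. \<not> adj G w w" and sym: "\<And>w y. adj G w y \<Longrightarrow> adj G y w"
    using assms unfolding simple_graph_def by auto
  have "(\<Sum>w\<in>verts G. x w * closed_adj_mult G x w)
      = (\<Sum>w\<in>verts G. \<Sum>y\<in>verts G. (if y = w then x w * x y else 0) + (if adj G w y then x w * x y else 0))"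
    unfolding cam_alt[OF assms] sum_distrib_left
    by (intro sum.cong refl) (auto simp: irr simp del: add_bit_eq_xor mult_bit_eq_and)
  also have "\<dots> = (\<Sum>w\<in>verts G. \<Sum>y\<in>verts G. (if y = w then x w * x y else 0))
      + (\<Sum>w\<in>verts G. \<Sum>y\<in>verts G. (if adj G w y then x w * x y else 0))"
    by (simp only: sum.distrib)
  also have "(\<Sum>w\<in>verts G. \<Sum>y\<in>verts G. (if adj G w y then x w * x y else 0)) = 0"
    by (rule zero_sym[OF fin]) (auto simp: irr intro: sym simp del: add_bit_eq_xor mult_bit_eq_and)
  also have "(\<Sum>w\<in>verts G. \<Sum>y\<in>verts G. (if y = w then x w * x y else 0)) = (\<Sum>w\<in>verts G. x w)"
    using fin by (simp del: add_bit_eq_xor mult_bit_eq_and)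
  finally show ?thesis by simp
qed

lemma bilin:
  assumes "simple_graph G"
  shows "(\<Sum>w\<in>verts G. x w * closed_adj_mult G p w) = (\<Sum>w\<in>verts G. p w * closed_adj_mult G x w)"
proof -
  have sym: "\<And>w y. adj G w y \<longleftrightarrow> adj G y w"
    using assms unfolding simple_graph_def by auto
  have "(\<Sum>w\<in>verts G. x w * closed_adj_mult G p w)
     = (\<Sum>w\<in>verts G. \<Sum>y\<in>verts G. if y = w \<or> adj G w y then x w * p y else 0)"
    unfolding cam_alt[OF assms] sum_distrib_left by (intro sum.cong refl) auto
  also have "\<dots> = (\<Sum>y\<in>verts G. \<Sum>w\<in>verts G. if y = w \<or> adj G w y then x w * p y else 0)"
    by (rule sum.swap)
  also have "\<dots> = (\<Sum>w\<in>verts G. p w * closed_adj_mult G x w)"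
    unfolding cam_alt[OF assms] sum_distrib_left
    by (intro sum.cong refl) (auto simp: sym mult.commute simp del: mult_bit_eq_and)
  finally show ?thesis .
qed

lemma key:
  assumes "simple_graph G" "v \<in> verts G"
    "\<And>w. w \<in> verts G \<Longrightarrow> closed_adj_mult G x w = (if w = v then 1 else 0)"
    "solution G p"
  shows "x v = p v"
proof -
  have fin: "finite (verts G)" using assms(1) simple_graph_def by blast
  have e1: "(\<Sum>w\<in>verts G. x w * closed_adj_mult G x w) = (\<Sum>w\<in>verts G. if w = v then x w else 0)"
    by (rule sum.cong) (simp_all add: assms(3) del: mult_bit_eq_and add_bit_eq_xor)
  have e2: "(\<Sum>w\<in>verts G. p w * closed_adj_mult G x w) = (\<Sum>w\<in>verts G. if w = v then p w else 0)"
    by (rule sum.cong) (simp_all add: assms(3) del: mult_bit_eq_and add_bit_eq_xor)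
  have "x v = (\<Sum>w\<in>verts G. x w * closed_adj_mult G x w)"
    unfolding e1 using assms(2) fin by (simp only: sum.delta if_True)
  also have "\<dots> = (\<Sum>w\<in>verts G. x w)" by (rule quad[OF assms(1)])
  also have "\<dots> = (\<Sum>w\<in>verts G. x w * closed_adj_mult G p w)"
    using assms(4) unfolding solution_def by (simp del: mult_bit_eq_and add_bit_eq_xor)
  also have "\<dots> = (\<Sum>w\<in>verts G. p w * closed_adj_mult G x w)" by (rule bilin[OF assms(1)])
  also have "\<dots> = p v"
    unfolding e2 using assms(2) fin by (simp only: sum.delta if_True)
  finally show ?thesis .
qed

lemma activation_sol:
  assumes "simple_graph G" "always_solvable G" "solution G p"
  shows "activation G v = (if p v = 1 then 1 else 0)"
proof -
  have nh: "\<not> half_activated G v"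
    using assms(2) unfolding half_activated_def always_solvable_def by auto
  have all: "\<And>q. solution G q \<Longrightarrow> q = p"
    using uniq[OF assms(2)] assms(3) unfolding solution_def by metis
  show ?thesis
  proof (cases "p v = 1")
    case True
    then have "always_activated G v" unfolding always_activated_def using nh all by auto
    then show ?thesis using nh True unfolding activation_def by simp
  next
    case False
    then have "p v = 0" by simp
    then have "never_activated G v" unfolding never_activated_def using nh all by auto
    moreover have "\<not> always_activated G v" unfolding always_activated_def using False assms(3) by auto
    ultimately show ?thesis using nh False unfolding activation_def by simp
  qed
qed

lemma verts_attach: "verts (attach_graph F u n G v) = verts F \<union> (\<Union>i<n. verts (G i))"
  by (simp add: attach_graph_def verts_def)

lemma adj_attach: "adj (attach_graph F u n G v) x y \<longleftrightarrow> adj F x y \<or> (\<exists>i<n. adj (G i) x y)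
            \<or> (\<exists>i<n. (x = v i \<and> y = u) \<or> (x = u \<and> y = v i))"
  by (simp add: attach_graph_def adj_def)

lemma camH_G:
  assumes sF: "simple_graph F" and sG: "\<And>i. i < n \<Longrightarrow> simple_graph (G i)"
    and dFG: "\<And>i. i < n \<Longrightarrow> verts F \<inter> verts (G i) = {}"
    and dGG: "\<And>i j. i < n \<Longrightarrow> j < n \<Longrightarrow> i \<noteq> j \<Longrightarrow> verts (G i) \<inter> verts (G j) = {}"
    and uF: "u \<in> verts F" and vG: "\<And>i. i < n \<Longrightarrow> v i \<in> verts (G i)"
    and i: "i < n" and w: "w \<in> verts (G i)"
  shows "closed_adj_mult (attach_graph F u n G v) l w
       = closed_adj_mult (G i) l w + (if w = v i then l u else 0)"
proof -
  have wF: "w \<notin> verts F" using dFG[OF i] w by auto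
  have nF: "\<not> adj F w y" for y using sF wF unfolding simple_graph_def by auto
  have wu: "w \<noteq> u" using wF uF by auto
  have nGj: "adj (G j) w y \<Longrightarrow> j < n \<Longrightarrow> j = i" for j y
    using sG[of j] dGG[OF i, of j] w unfolding simple_graph_def by blast
  have vj: "w = v j \<Longrightarrow> j < n \<Longrightarrow> j = i" for j
    using vG[of j] dGG[OF i, of j] w by blast
  have Gi: "adj (G i) w y \<Longrightarrow> y \<in> verts (G i)" for y
    using sG[OF i] unfolding simple_graph_def by blast
  have uGi: "u \<notin> verts (G i)" using dFG[OF i] uF by auto
  have seteq: "{y \<in> verts (attach_graph F u n G v). y = w \<or> adj (attach_graph F u n G v) w y}
      = {y\<in>verts (G i). y = w \<or> adj (G i) w y} \<union> (if w = v i then {u} else {})"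
  proof (rule set_eqI, rule iffI)
    fix y assume "y \<in> {y \<in> verts (attach_graph F u n G v). y = w \<or> adj (attach_graph F u n G v) w y}"
    then have "y = w \<or> adj F w y \<or> (\<exists>j<n. adj (G j) w y) \<or> (\<exists>j<n. (w = v j \<and> y = u) \<or> (w = u \<and> y = v j))"
      unfolding adj_attach by (simp only: mem_Collect_eq)
    then consider "y = w" | j where "j < n" "adj (G j) w y" | j where "j < n" "w = v j" "y = u"
      using nF wu by blast
    then show "y \<in> {y\<in>verts (G i). y = w \<or> adj (G i) w y} \<union> (if w = v i then {u} else {})"
    proof cases
      case 1 then show ?thesis using w by simp
    next
      case 2 then have "j = i" using nGj by blast
      then show ?thesis using 2 Gi by simp
    next
      case 3 then have "j = i" using vj by blast
      then show ?thesis using 3 by simp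
    qed
  next
    fix y assume "y \<in> {y\<in>verts (G i). y = w \<or> adj (G i) w y} \<union> (if w = v i then {u} else {})"
    then consider "y \<in> verts (G i)" "y = w \<or> adj (G i) w y" | "w = v i" "y = u"
      by (auto split: if_splits)
    then show "y \<in> {y \<in> verts (attach_graph F u n G v). y = w \<or> adj (attach_graph F u n G v) w y}"
    proof cases
      case 1
      have "y \<in> verts (attach_graph F u n G v)" unfolding verts_attach using 1(1) i by blast
      moreover have "y = w \<or> adj (attach_graph F u n G v) w y" unfolding adj_attach using 1(2) i by blast
      ultimately show ?thesis by blast
    next
      case 2
      have "y \<in> verts (attach_graph F u n G v)" unfolding verts_attach using 2 uF by blast
      moreover have "adj (attach_graph F u n G v) w y" unfolding adj_attach using 2 i by blast
      ultimately show ?thesis by blast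
    qed
  qed
  have fin: "finite (verts (G i))" using sG[OF i] simple_graph_def by blast
  show ?thesis
    unfolding closed_adj_mult_def seteq
    by (subst sum.union_disjoint) (use fin uGi in auto)
qed

lemma camH_F:
  assumes sF: "simple_graph F" and sG: "\<And>i. i < n \<Longrightarrow> simple_graph (G i)"
    and dFG: "\<And>i. i < n \<Longrightarrow> verts F \<inter> verts (G i) = {}"
    and dGG: "\<And>i j. i < n \<Longrightarrow> j < n \<Longrightarrow> i \<noteq> j \<Longrightarrow> verts (G i) \<inter> verts (G j) = {}"
    and uF: "u \<in> verts F" and vG: "\<And>i. i < n \<Longrightarrow> v i \<in> verts (G i)"
    and w: "w \<in> verts F"
  shows "closed_adj_mult (attach_graph F u n G v) l w
       = closed_adj_mult F l w + (if w = u then (\<Sum>i<n. l (v i)) else 0)"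
proof -
  have wG: "j < n \<Longrightarrow> w \<notin> verts (G j)" for j using dFG[of j] w by auto
  have nG: "j < n \<Longrightarrow> \<not> adj (G j) w y" for j y using sG[of j] wG[of j] unfolding simple_graph_def by auto
  have wv: "j < n \<Longrightarrow> w \<noteq> v j" for j using wG vG by auto
  have Fy: "adj F w y \<Longrightarrow> y \<in> verts F" for y
    using sF unfolding simple_graph_def by blast
  have inj: "inj_on v {..<n}"
  proof (rule inj_onI)
    fix i j assume "i \<in> {..<n}" "j \<in> {..<n}" "v i = v j"
    then show "i = j" using vG[of i] vG[of j] dGG[of i j] by auto
  qed
  have vF: "j < n \<Longrightarrow> v j \<notin> verts F" for j using dFG[of j] vG[of j] by auto
  have seteq: "{y \<in> verts (attach_graph F u n G v). y = w \<or> adj (attach_graph F u n G v) w y}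
      = {y\<in>verts F. y = w \<or> adj F w y} \<union> (if w = u then v ` {..<n} else {})"
  proof (rule set_eqI, rule iffI)
    fix y assume "y \<in> {y \<in> verts (attach_graph F u n G v). y = w \<or> adj (attach_graph F u n G v) w y}"
    then have yH: "y \<in> verts F \<union> (\<Union>i<n. verts (G i))" and
      "y = w \<or> adj F w y \<or> (\<exists>j<n. adj (G j) w y) \<or> (\<exists>j<n. (w = v j \<and> y = u) \<or> (w = u \<and> y = v j))"
      unfolding adj_attach verts_attach by (simp_all only: mem_Collect_eq)
    then consider "y = w" | "adj F w y" | j where "j < n" "w = u" "y = v j"
      using nG wv by blast
    then show "y \<in> {y\<in>verts F. y = w \<or> adj F w y} \<union> (if w = u then v ` {..<n} else {})"
    proof cases
      case 1 then show ?thesis using w by simp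
    next
      case 2 then show ?thesis using Fy by simp
    next
      case 3 then show ?thesis by simp
    qed
  next
    fix y assume "y \<in> {y\<in>verts F. y = w \<or> adj F w y} \<union> (if w = u then v ` {..<n} else {})"
    then consider "y \<in> verts F" "y = w \<or> adj F w y" | j where "j < n" "w = u" "y = v j"
      by (auto split: if_splits)
    then show "y \<in> {y \<in> verts (attach_graph F u n G v). y = w \<or> adj (attach_graph F u n G v) w y}"
    proof cases
      case 1
      have "y \<in> verts (attach_graph F u n G v)" unfolding verts_attach using 1(1) by blast
      moreover have "y = w \<or> adj (attach_graph F u n G v) w y" unfolding adj_attach using 1(2) by blast
      ultimately show ?thesis by blast
    next
      case 2
      have "y \<in> verts (attach_graph F u n G v)" unfolding verts_attach using 2 vG by blast
      moreover have "adj (attach_graph F u n G v) w y" unfolding adj_attach using 2 by blast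
      ultimately show ?thesis by blast
    qed
  qed
  have fin: "finite (verts F)" using sF simple_graph_def by blast
  have disj: "{y\<in>verts F. y = w \<or> adj F w y} \<inter> v ` {..<n} = {}" using vF by auto
  show ?thesis
  proof (cases "w = u")
    case True
    show ?thesis
    proof -
      have a: "sum l ({y\<in>verts F. y = w \<or> adj F w y} \<union> v ` {..<n})
          = sum l {y\<in>verts F. y = w \<or> adj F w y} + sum l (v ` {..<n})"
        by (rule sum.union_disjoint) (use fin disj in auto)
      have b: "sum l (v ` {..<n}) = (\<Sum>i<n. l (v i))" using sum.reindex[OF inj] by simp
      show ?thesis unfolding closed_adj_mult_def seteq if_P[OF True] a b ..
    qed
  next
    case False
    then show ?thesis unfolding closed_adj_mult_def seteq by simp
  qed
qed

theorem corollary3p4: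
  fixes F :: "'a graph" and G :: "nat \<Rightarrow> 'a graph" and u :: 'a and v :: "nat \<Rightarrow> 'a" and n :: nat
  assumes "simple_graph F" and "always_solvable F"
    and "\<And>i. i < n \<Longrightarrow> simple_graph (G i)"
    and "\<And>i. i < n \<Longrightarrow> always_solvable (G i)"
    and "\<And>i. i < n \<Longrightarrow> verts F \<inter> verts (G i) = {}"
    and "\<And>i j. i < n \<Longrightarrow> j < n \<Longrightarrow> i \<noteq> j \<Longrightarrow> verts (G i) \<inter> verts (G j) = {}"
    and "u \<in> verts F"
    and "\<And>i. i < n \<Longrightarrow> v i \<in> verts (G i)"
  shows "(activation F u = 0 \<longrightarrow> always_solvable (attach_graph F u n G v))
       \<and> (activation F u = 1 \<longrightarrow>
            (always_solvable (attach_graph F u n G v)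
             \<longleftrightarrow> even (card {i. i < n \<and> activation (G i) (v i) = 1})))"
proof -
  note sF = assms(1) and asF = assms(2) and sG = assms(3) and asG = assms(4)
    and dFG = assms(5) and dGG = assms(6) and uF = assms(7) and vG = assms(8)
  let ?H = "attach_graph F u n G v"
  have vecF: "vec_on F (\<lambda>w. if w \<in> verts F then 1 else 0)" unfolding vec_on_def by simp
  obtain pF where pF: "solution F pF" using exist[OF sF asF vecF] unfolding solution_def by auto
  have "\<forall>i. \<exists>p. i < n \<longrightarrow> solution (G i) p"
  proof (intro allI)
    fix i show "\<exists>p. i < n \<longrightarrow> solution (G i) p"
    proof (cases "i < n")
      case True
      have "vec_on (G i) (\<lambda>w. if w \<in> verts (G i) then 1 else 0)" unfolding vec_on_def by simp
      then show ?thesis using exist[OF sG[OF True] asG[OF True]] True unfolding solution_def by fastforce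
    qed simp
  qed
  then obtain pG where pG: "\<And>i. i < n \<Longrightarrow> solution (G i) (pG i)" by metis
  define c where "c = (\<Sum>i<n. pG i (v i))"
  have actF: "activation F u = (if pF u = 1 then 1 else 0)" by (rule activation_sol[OF sF asF pF])
  have actG: "\<And>i. i < n \<Longrightarrow> activation (G i) (v i) = (if pG i (v i) = 1 then 1 else 0)"
    using activation_sol[OF sG asG pG] by blast
  have par: "even (card {i. i < n \<and> activation (G i) (v i) = 1}) \<longleftrightarrow> c = 0"
  proof -
    have "{i. i < n \<and> activation (G i) (v i) = 1} = {i\<in>{..<n}. pG i (v i) = 1}" using actG by (auto split: if_splits)
    moreover have "c = of_nat (card {i\<in>{..<n}. pG i (v i) = 1})"
      unfolding c_def by (rule bit_sum_card) simp
    moreover have "c = 0 \<longleftrightarrow> c \<noteq> 1" by simp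
    ultimately show ?thesis using bit_of_nat_one by metis
  qed
  have inH_G: "w \<in> verts ?H" if "i < n" "w \<in> verts (G i)" for i w
    using that unfolding verts_attach by blast
  have inH_F: "w \<in> verts ?H" if "w \<in> verts F" for w
    using that unfolding verts_attach by blast

  have A: "pF u = 1 \<and> c = 1" if nl: "null_pattern ?H l" and nz: "l \<noteq> (\<lambda>_. 0)" for l
  proof -
    define lF where "lF = (\<lambda>x. if x \<in> verts F then l x else 0)"
    define lG where "lG = (\<lambda>i x. if x \<in> verts (G i) then l x else 0)"
    have vlF: "vec_on F lF" unfolding vec_on_def lF_def by simp
    have vlG: "vec_on (G i) (lG i)" for i unfolding vec_on_def lG_def by simp
    have camG: "closed_adj_mult (G i) (lG i) w = (if w = v i then l u else 0)"
      if "i < n" "w \<in> verts (G i)" for i w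
    proof -
      have "closed_adj_mult (G i) (lG i) w = closed_adj_mult (G i) l w"
        by (rule cam_cong) (simp add: lG_def)
      moreover have "closed_adj_mult ?H l w = 0" using nl inH_G[OF that] unfolding null_pattern_def by blast
      moreover have "closed_adj_mult ?H l w = closed_adj_mult (G i) l w + (if w = v i then l u else 0)"
        by (rule camH_G[where F=F and n=n and G=G and u=u and v=v, OF sF sG dFG dGG uF vG that])
      ultimately show ?thesis by (metis bit_add_eq0)
    qed
    have camF: "closed_adj_mult F lF w = (if w = u then (\<Sum>i<n. l (v i)) else 0)"
      if "w \<in> verts F" for w
    proof -
      have "closed_adj_mult F lF w = closed_adj_mult F l w"
        by (rule cam_cong) (simp add: lF_def)
      moreover have "closed_adj_mult ?H l w = 0" using nl inH_F[OF that] unfolding null_pattern_def by blast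
      moreover have "closed_adj_mult ?H l w = closed_adj_mult F l w + (if w = u then (\<Sum>i<n. l (v i)) else 0)"
        by (rule camH_F[where F=F and n=n and G=G and u=u and v=v, OF sF sG dFG dGG uF vG that])
      ultimately show ?thesis by (metis bit_add_eq0)
    qed
    have lvi: "l (v i) = lG i (v i)" if "i < n" for i using vG[OF that] by (simp add: lG_def)
    have luF: "l u = lF u" using uF by (simp add: lF_def)
    show ?thesis
    proof (cases "l u = 0")
      case True
      have lG0: "lG i = (\<lambda>_. 0)" if "i < n" for i
      proof -
        have "null_pattern (G i) (lG i)" unfolding null_pattern_def
          using vlG camG[OF that] True by simp
        then show ?thesis using asG[OF that] unfolding always_solvable_def by blast
      qed
      have "(\<Sum>i<n. l (v i)) = 0" using lvi lG0 by simp
      then have "null_pattern F lF" unfolding null_pattern_def using vlF camF by simp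
      then have lF0: "lF = (\<lambda>_. 0)" using asF unfolding always_solvable_def by blast
      have "l = (\<lambda>_. 0)"
      proof
        fix x
        show "l x = 0"
        proof (cases "x \<in> verts ?H")
          case True
          then consider "x \<in> verts F" | i where "i < n" "x \<in> verts (G i)"
            unfolding verts_attach by blast
          then show ?thesis
          proof cases
            case 1 then show ?thesis using fun_cong[OF lF0, of x] by (simp add: lF_def)
          next
            case 2 then show ?thesis using fun_cong[OF lG0[OF 2(1)], of x] by (simp add: lG_def)
          qed
        next
          case False then show ?thesis using nl unfolding null_pattern_def vec_on_def by blast
        qed
      qed
      then show ?thesis using nz by blast
    next
      case False
      then have lu1: "l u = 1" by simp
      have "lG i (v i) = pG i (v i)" if "i < n" for i
        by (rule key[OF sG[OF that] vG[OF that] _ pG[OF that]]) (use camG[OF that] lu1 in simp)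
      then have sc: "(\<Sum>i<n. l (v i)) = c" unfolding c_def using lvi by simp
      have c1: "c = 1"
      proof (rule ccontr)
        assume "c \<noteq> 1"
        then have "c = 0" by simp
        then have "null_pattern F lF" unfolding null_pattern_def using vlF camF sc by simp
        then have "lF = (\<lambda>_. 0)" using asF unfolding always_solvable_def by blast
        then show False using luF lu1 by simp
      qed
      have "lF u = pF u"
        by (rule key[OF sF uF _ pF]) (use camF sc c1 in simp)
      then show ?thesis using c1 luF lu1 by simp
    qed
  qed

  have B: "\<not> always_solvable ?H" if pFu: "pF u = 1" and c1: "c = 1"
  proof -
    have vb: "vec_on F (\<lambda>w. if w = u then 1 else 0)" using uF unfolding vec_on_def by auto
    obtain xF where xF: "vec_on F xF" "\<And>w. w \<in> verts F \<Longrightarrow> closed_adj_mult F xF w = (if w = u then 1 else 0)"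
      using exist[OF sF asF vb] by blast
    have "\<forall>i. \<exists>x. i < n \<longrightarrow> (vec_on (G i) x \<and> (\<forall>w\<in>verts (G i). closed_adj_mult (G i) x w = (if w = v i then 1 else 0)))"
    proof (intro allI)
      fix i show "\<exists>x. i < n \<longrightarrow> (vec_on (G i) x \<and> (\<forall>w\<in>verts (G i). closed_adj_mult (G i) x w = (if w = v i then 1 else 0)))"
      proof (cases "i < n")
        case True
        have "vec_on (G i) (\<lambda>w. if w = v i then 1 else 0)" using vG[OF True] unfolding vec_on_def by auto
        then show ?thesis using exist[OF sG[OF True] asG[OF True]] True by blast
      qed simp
    qed
    then obtain xG where xGv: "\<And>i. i < n \<Longrightarrow> vec_on (G i) (xG i)"
      and xGc: "\<And>i w. i < n \<Longrightarrow> w \<in> verts (G i) \<Longrightarrow> closed_adj_mult (G i) (xG i) w = (if w = v i then 1 else 0)"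
      by metis
    have xFu: "xF u = 1" using key[OF sF uF xF(2) pF] pFu by simp
    have xGvi: "xG i (v i) = pG i (v i)" if "i < n" for i
      using key[OF sG[OF that] vG[OF that] xGc[OF that] pG[OF that]] .
    define l where "l = (\<lambda>x. xF x + (\<Sum>j<n. xG j x))"
    have lF: "l x = xF x" if "x \<in> verts F" for x
    proof -
      have "xG j x = 0" if "j < n" for j
        using xGv[OF that] dFG[OF that] \<open>x \<in> verts F\<close> unfolding vec_on_def by blast
      then show ?thesis unfolding l_def by simp
    qed
    have lG: "l x = xG i x" if "i < n" "x \<in> verts (G i)" for i x
    proof -
      have "xF x = 0" using xF(1) dFG[OF that(1)] that(2) unfolding vec_on_def by blast
      moreover have "(\<Sum>j<n. xG j x) = (\<Sum>j<n. if j = i then xG i x else 0)"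
      proof (rule sum.cong)
        fix j assume "j \<in> {..<n}"
        then show "xG j x = (if j = i then xG i x else 0)"
          using xGv[of j] dGG[of i j] that unfolding vec_on_def by auto
      qed simp
      ultimately show ?thesis unfolding l_def using that(1) by simp
    qed
    have l0: "l x = 0" if "x \<notin> verts ?H" for x
    proof -
      have "xF x = 0" using xF(1) that inH_F unfolding vec_on_def by blast
      moreover have "xG j x = 0" if "j < n" for j
        using xGv[OF that] \<open>x \<notin> verts ?H\<close> inH_G[OF that] unfolding vec_on_def by blast
      ultimately show ?thesis unfolding l_def by simp
    qed
    have slv: "(\<Sum>i<n. l (v i)) = c" unfolding c_def
      by (rule sum.cong) (simp_all add: lG[OF _ vG] xGvi)
    have "null_pattern ?H l"
      unfolding null_pattern_def
    proof (intro conjI ballI)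
      show "vec_on ?H l" unfolding vec_on_def using l0 by blast
    next
      fix w assume "w \<in> verts ?H"
      then consider "w \<in> verts F" | i where "i < n" "w \<in> verts (G i)"
        unfolding verts_attach by blast
      then show "closed_adj_mult ?H l w = 0"
      proof cases
        case 1
        have "closed_adj_mult F l w = closed_adj_mult F xF w" by (rule cam_cong) (simp add: lF)
        then show ?thesis using camH_F[where F=F and n=n and G=G and u=u and v=v, OF sF sG dFG dGG uF vG 1, of l] slv c1 xF(2)[OF 1] by simp
      next
        case 2
        have "closed_adj_mult (G i) l w = closed_adj_mult (G i) (xG i) w"
          by (rule cam_cong) (simp add: lG[OF 2(1)])
        then show ?thesis using camH_G[where F=F and n=n and G=G and u=u and v=v, OF sF sG dFG dGG uF vG 2, of l] xGc[OF 2] lF[OF uF] xFu by simp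
      qed
    qed
    moreover have "l \<noteq> (\<lambda>_. 0)" using lF[OF uF] xFu by (metis zero_neq_one)
    ultimately show ?thesis unfolding always_solvable_def by blast
  qed

  show ?thesis
  proof (intro conjI impI)
    assume "activation F u = 0"
    then have "pF u \<noteq> 1" using actF by (auto split: if_splits)
    then show "always_solvable ?H" using A unfolding always_solvable_def by blast
  next
    assume "activation F u = 1"
    then have pFu: "pF u = 1" using actF by (auto split: if_splits)
    show "always_solvable ?H \<longleftrightarrow> even (card {i. i < n \<and> activation (G i) (v i) = 1})"
      unfolding par
    proof
      assume "always_solvable ?H"
      then show "c = 0" using B[OF pFu] by (metis bit_not_one_iff)
    next
      assume "c = 0"
      then show "always_solvable ?H" using A unfolding always_solvable_def by fastforce
    qed
  qed
qed

end
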